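(* Let $n\ge 3$, let $a_0,\ldots,a_{n-1}$ be indeterminates over $\mathbb{Q}$, $f=x^n+a_{n-1}x^{n-1}+\cdots+a_0$, \[f_1(x,y)=\frac{f(y)-f(x)}{y-x},\qquad f_3(x,y)=\frac{f(y)-2f\left(\frac{x+y}{2}\right)+f(x)}{\frac{(y-x)^2}{2}},\] and $F=\operatorname{res}(f_1,f_3,y)$. Then $\deg(F,x)=(n-1)(n-2)$.
   Context: The quotients are polynomials in $x,y$; $\operatorname{res}(\cdot,\cdot,y)$ is the Sylvester resultant with respect to $y$. *)

theory Defs
  imports "HOL-Library.Poly_Mapping" "HOL-Computational_Algebra.Polynomial"
    "Subresultants.Resultant_Prelim"
begin

text \<open>Multivariate polynomials over the rationals in indeterminates a_0, a_1, ...: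
  monomials are finitely supported exponent vectors nat \<Rightarrow>0 nat.\<close>
type_synonym mpoly = "(nat \<Rightarrow>\<^sub>0 nat) \<Rightarrow>\<^sub>0 rat"

definition mconst :: "rat \<Rightarrow> mpoly" where
  "mconst c = Poly_Mapping.single 0 c"

definition avar :: "nat \<Rightarrow> mpoly" where
  "avar i = Poly_Mapping.single (Poly_Mapping.single i 1) 1"

definition fpoly :: "nat \<Rightarrow> mpoly poly" where
  "fpoly n = monom 1 n + (\<Sum>i<n. monom (avar i) i)"

text \<open>Bivariate polynomials in x, y over Q[a] are represented as mpoly poly poly:
  the outer variable is y, the coefficients are polynomials in x.\<close>
definition Xv :: "mpoly poly poly" where "Xv = [:[:0, 1:]:]"
definition Yv :: "mpoly poly poly" where "Yv = [:0, 1:]"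

definition eval2 :: "mpoly poly \<Rightarrow> mpoly poly poly \<Rightarrow> mpoly poly poly" where
  "eval2 p z = poly (map_poly (\<lambda>c. [:[:c:]:]) p) z"

definition f1 :: "nat \<Rightarrow> mpoly poly poly" where
  "f1 n = (THE q. (Yv - Xv) * q = eval2 (fpoly n) Yv - eval2 (fpoly n) Xv)"

definition f3 :: "nat \<Rightarrow> mpoly poly poly" where
  "f3 n = (THE q. (smult [:mconst (1/2):] ((Yv - Xv)^2)) * q =
      eval2 (fpoly n) Yv
      - 2 * eval2 (fpoly n) (smult [:mconst (1/2):] (Xv + Yv))
      + eval2 (fpoly n) Xv)"

definition Fres :: "nat \<Rightarrow> mpoly poly" where
  "Fres n = resultant (f1 n) (f3 n)"

end

theory Submission
  imports Defs "Subresultants.Subresultant_Gcd" "HOL-Computational_Algebra.Fundamental_Theorem_Algebra"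
    "HOL-Computational_Algebra.Field_as_Ring"
begin

declare pCons_one [simp del]

definition hb :: "nat \<Rightarrow> 'a::comm_ring_1 poly poly \<Rightarrow> bool" where
  "hb d P \<longleftrightarrow> (\<forall>j. coeff P j \<noteq> 0 \<longrightarrow> j \<le> d \<and> degree (coeff P j) + j \<le> d)"

definition top :: "nat \<Rightarrow> 'a::comm_ring_1 poly poly \<Rightarrow> 'a poly" where
  "top d P = (\<Sum>j\<le>d. monom (coeff (coeff P j) (d - j)) j)"

lemma coeff_top: "coeff (top d P) k = (if k \<le> d then coeff (coeff P k) (d - k) else 0)"
  unfolding top_def coeff_sum coeff_monom
  by (auto simp: sum.delta)

lemma degree_top: "degree (top d P) \<le> d"
  by (rule degree_le) (auto simp: coeff_top)

lemma hbD1: "hb d P \<Longrightarrow> d < j \<Longrightarrow> coeff P j = 0"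
  unfolding hb_def by force

lemma hbD2: "hb d P \<Longrightarrow> degree (coeff P j) \<le> d - j"
  unfolding hb_def by (cases "coeff P j = 0") force+

lemma hbI: "(\<And>j. d < j \<Longrightarrow> coeff P j = 0) \<Longrightarrow> (\<And>j. j \<le> d \<Longrightarrow> degree (coeff P j) \<le> d - j) \<Longrightarrow> hb d P"
  unfolding hb_def by (metis le_diff_conv2 linorder_not_le)

lemma coeff_mult_bound:
  fixes p q :: "'a::comm_semiring_1 poly"
  assumes "degree p \<le> a" "degree q \<le> b"
  shows "coeff (p*q) (a+b) = coeff p a * coeff q b"
proof -
  have "coeff (p*q) (a+b) = (\<Sum>i\<le>a+b. coeff p i * coeff q (a+b-i))" by (rule coeff_mult)
  also have "\<dots> = (\<Sum>i\<in>{a}. coeff p i * coeff q (a+b-i))"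
  proof (rule sum.mono_neutral_right)
    show "\<forall>i\<in>{..a + b} - {a}. coeff p i * coeff q (a + b - i) = 0"
    proof
      fix i assume "i \<in> {..a + b} - {a}"
      then have "i < a \<or> i > a" by auto
      then show "coeff p i * coeff q (a + b - i) = 0"
        using assms by (auto simp: coeff_eq_0)
    qed
  qed auto
  finally show ?thesis by simp
qed

lemma hb_mult:
  fixes P Q :: "'a::comm_ring_1 poly poly"
  assumes P: "hb a P" and Q: "hb b Q"
  shows "hb (a+b) (P*Q)"
proof (rule hbI)
  fix j assume j: "a + b < j"
  show "coeff (P*Q) j = 0" unfolding coeff_mult
  proof (rule sum.neutral, rule ballI)
    fix i assume "i \<in> {..j}"
    then have "a < i \<or> b < j - i" using j by auto
    then show "coeff P i * coeff Q (j - i) = 0" using hbD1[OF P] hbD1[OF Q] by auto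
  qed
next
  fix j assume j: "j \<le> a + b"
  show "degree (coeff (P*Q) j) \<le> a + b - j" unfolding coeff_mult
  proof (rule degree_sum_le)
    fix i assume i: "i \<in> {..j}"
    show "degree (coeff P i * coeff Q (j - i)) \<le> a + b - j"
    proof (cases "a < i \<or> b < j - i")
      case True then show ?thesis using hbD1[OF P] hbD1[OF Q] by auto
    next
      case False
      have "degree (coeff P i * coeff Q (j - i)) \<le> degree (coeff P i) + degree (coeff Q (j - i))"
        by (rule degree_mult_le)
      also have "\<dots> \<le> (a - i) + (b - (j - i))" using hbD2[OF P] hbD2[OF Q] add_mono by blast
      also have "\<dots> = a + b - j" using False i by auto
      finally show ?thesis .
    qed
  qed auto
qed

lemma top_mult:
  fixes P Q :: "'a::comm_ring_1 poly poly"
  assumes P: "hb a P" and Q: "hb b Q"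
  shows "top (a+b) (P*Q) = top a P * top b Q"
proof (rule poly_eqI)
  fix k
  show "coeff (top (a + b) (P * Q)) k = coeff (top a P * top b Q) k"
  proof (cases "k \<le> a + b")
    case False
    have "degree (top a P * top b Q) \<le> a + b"
      using degree_mult_le[of "top a P" "top b Q"] degree_top[of a P] degree_top[of b Q] by linarith
    then show ?thesis using False by (auto simp: coeff_top coeff_eq_0)
  next
    case True
    have "coeff (top (a + b) (P * Q)) k = (\<Sum>i\<le>k. coeff (coeff P i * coeff Q (k - i)) (a + b - k))"
      using True by (simp add: coeff_top coeff_mult coeff_sum)
    also have "\<dots> = (\<Sum>i\<le>k. coeff (top a P) i * coeff (top b Q) (k - i))"
    proof (rule sum.cong[OF refl])
      fix i assume i: "i \<in> {..k}"
      show "coeff (coeff P i * coeff Q (k - i)) (a + b - k) = coeff (top a P) i * coeff (top b Q) (k - i)"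
      proof (cases "a < i \<or> b < k - i")
        case True then show ?thesis using hbD1[OF P] hbD1[OF Q] by (auto simp: coeff_top)
      next
        case False
        then have e: "a + b - k = (a - i) + (b - (k - i))" using i by auto
        have "coeff (coeff P i * coeff Q (k - i)) (a + b - k) = coeff (coeff P i * coeff Q (k - i)) ((a-i)+(b-(k-i)))"
          by (simp only: e)
        also have "\<dots> = coeff (coeff P i) (a-i) * coeff (coeff Q (k - i)) (b-(k-i))"
          by (rule coeff_mult_bound[OF hbD2[OF P] hbD2[OF Q]])
        finally show ?thesis using False i by (simp add: coeff_top)
      qed
    qed
    also have "\<dots> = coeff (top a P * top b Q) k" by (simp add: coeff_mult)
    finally show ?thesis .
  qed
qed

lemma hb_add: "hb d P \<Longrightarrow> hb d Q \<Longrightarrow> hb d (P + Q)"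
  by (rule hbI) (auto simp: hbD1 intro: order.trans[OF degree_add_le] hbD2)

lemma top_add: "top d (P + Q) = top d P + top d Q"
  by (rule poly_eqI) (simp add: coeff_top)

lemma hb_uminus: "hb d P \<Longrightarrow> hb d (- P)"
  by (rule hbI) (auto simp: hbD1 hbD2)

lemma top_uminus: "top d (- P) = - top d P"
  by (rule poly_eqI) (simp add: coeff_top)

lemma hb_diff: "hb d P \<Longrightarrow> hb d Q \<Longrightarrow> hb d (P - Q)"
  using hb_add[of d P "- Q"] hb_uminus by auto

lemma top_diff: "top d (P - Q) = top d P - top d Q"
  by (rule poly_eqI) (simp add: coeff_top)

lemma hb_0[simp]: "hb d 0" by (simp add: hb_def)
lemma top_0[simp]: "top d 0 = 0" by (rule poly_eqI) (simp add: coeff_top)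

lemma hb_mono: "hb d P \<Longrightarrow> d \<le> e \<Longrightarrow> hb e P"
  unfolding hb_def by force

lemma top_above: assumes "hb d P" "d < e" shows "top e P = 0"
proof (rule poly_eqI)
  fix k
  show "coeff (top e P) k = coeff 0 k"
  proof (cases "k \<le> e")
    case True
    have "coeff (coeff P k) (e - k) = 0"
    proof (cases "coeff P k = 0")
      case False
      then have "k \<le> d" using hbD1[OF assms(1), of k] by force
      then have "degree (coeff P k) < e - k" using hbD2[OF assms(1), of k] assms(2) by auto
      then show ?thesis by (simp add: coeff_eq_0)
    qed simp
    then show ?thesis using True by (simp add: coeff_top)
  qed (simp add: coeff_top)
qed

lemma hb_sum: "finite A \<Longrightarrow> (\<And>x. x \<in> A \<Longrightarrow> hb d (f x)) \<Longrightarrow> hb d (\<Sum>x\<in>A. f x)"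
  by (induction A rule: finite_induct) (auto intro: hb_add)

lemma top_sum: "finite A \<Longrightarrow> top d (\<Sum>x\<in>A. f x) = (\<Sum>x\<in>A. top d (f x))"
  by (induction A rule: finite_induct) (auto simp: top_add)

lemma hb_const: "hb 0 [:[:c:]:]"
  by (rule hbI) (auto simp: coeff_pCons split: nat.splits)

lemma top_const: "top 0 [:[:c:]:] = [:c:]"
  by (rule poly_eqI) (auto simp: coeff_top coeff_pCons split: nat.splits)

lemma hb_1: "hb 0 1"
  using hb_const[of 1] by (simp only: pCons_one)

lemma top_1: "top 0 1 = 1"
  using top_const[of 1] by (simp only: pCons_one)

lemma hb_power: "hb a P \<Longrightarrow> hb (k * a) (P ^ k)"
  by (induction k) (auto simp: hb_1 intro: hb_mult)

lemma top_power: "hb a P \<Longrightarrow> top (k * a) (P ^ k) = top a P ^ k"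
proof (induction k)
  case 0 then show ?case by (simp add: top_1)
next
  case (Suc k)
  have "top (Suc k * a) (P ^ Suc k) = top (a + k * a) (P * P ^ k)" by (simp add: add.commute)
  also have "\<dots> = top a P * top (k * a) (P ^ k)" by (rule top_mult[OF Suc.prems hb_power[OF Suc.prems]])
  finally show ?case using Suc by simp
qed


lemma hb_ex: "\<exists>d. hb d P"
proof -
  define d where "d = degree P + (\<Sum>j\<le>degree P. degree (coeff P j))"
  have "hb d P"
  proof (rule hbI)
    fix j assume "d < j" then show "coeff P j = 0" unfolding d_def by (simp add: coeff_eq_0)
  next
    fix j assume j: "j \<le> d"
    show "degree (coeff P j) \<le> d - j"
    proof (cases "j \<le> degree P")
      case True
      have "degree (coeff P j) \<le> (\<Sum>j\<le>degree P. degree (coeff P j))"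
        by (rule member_le_sum) (use True in auto)
      then show ?thesis unfolding d_def using True by linarith
    qed (simp add: coeff_eq_0)
  qed
  then show ?thesis by blast
qed

lemma hb_top0:
  assumes "hb d P" "top d P = 0"
  shows "hb (d - 1) P" "d = 0 \<Longrightarrow> P = 0"
proof -
  have lt: "degree (coeff P j) + j < d" if "coeff P j \<noteq> 0" for j
  proof -
    have a: "j \<le> d" "degree (coeff P j) + j \<le> d" using assms(1) that unfolding hb_def by auto
    show ?thesis
    proof (rule ccontr)
      assume "\<not> ?thesis"
      then have "d - j = degree (coeff P j)" using a by auto
      then have "coeff (top d P) j = lead_coeff (coeff P j)" using a by (simp add: coeff_top)
      then show False using that assms(2) by simp
    qed
  qed
  show "hb (d - 1) P" unfolding hb_def using lt by fastforce
  show "P = 0" if "d = 0" using lt that by (metis less_nat_zero_code poly_eqI coeff_0)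
qed

lemma top_nz: "hb d P \<Longrightarrow> P \<noteq> 0 \<Longrightarrow> \<exists>t\<le>d. hb t P \<and> top t P \<noteq> 0"
proof (induction d)
  case 0 then show ?case using hb_top0[of 0 P] by auto
next
  case (Suc d)
  show ?case
  proof (cases "top (Suc d) P = 0")
    case True
    then have "hb d P" using hb_top0(1)[OF Suc.prems(1)] by simp
    then show ?thesis using Suc.IH Suc.prems(2) le_Suc_eq by blast
  qed (use Suc.prems in auto)
qed

lemma hb_div:
  fixes D q :: "'a::idom poly poly"
  assumes D: "hb e D" "top e D \<noteq> 0" and Dq: "hb d (D * q)" and ed: "e \<le> d"
  shows "hb (d - e) q"
proof (cases "q = 0")
  case False
  obtain d0 where "hb d0 q" using hb_ex by blast
  then obtain t where t: "hb t q" "top t q \<noteq> 0" using top_nz False by blast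
  have "top (e + t) (D * q) = top e D * top t q" by (rule top_mult[OF D(1) t(1)])
  also have "\<dots> \<noteq> 0" using D(2) t(2) by simp
  finally have "\<not> d < e + t" using top_above[OF Dq] by blast
  then show ?thesis using hb_mono[OF t(1)] by simp
qed simp

lemma top_div:
  fixes D q :: "'a::idom poly poly"
  assumes D: "hb e D" "top e D \<noteq> 0" and Dq: "hb d (D * q)" and ed: "e \<le> d"
  shows "top d (D * q) = top e D * top (d - e) q"
  using top_mult[OF D(1) hb_div[OF assms]] ed by simp


lemma hb_Xv: "hb 1 Xv" unfolding Xv_def by (rule hbI) (auto simp: coeff_pCons split: nat.splits)
lemma top_Xv: "top 1 Xv = 1"
  unfolding Xv_def by (rule poly_eqI) (auto simp: coeff_top coeff_pCons split: nat.splits)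
lemma hb_Yv: "hb 1 Yv" unfolding Yv_def by (rule hbI) (auto simp: coeff_pCons split: nat.splits)
lemma top_Yv: "top 1 Yv = [:0,1:]"
  unfolding Yv_def by (rule poly_eqI) (auto simp: coeff_top coeff_pCons split: nat.splits)

lemma eval2_sum: "eval2 p z = (\<Sum>i\<le>degree p. [:[:coeff p i:]:] * z ^ i)"
proof -
  have d: "degree (map_poly (\<lambda>c. [:[:c:]:]) p) = degree p"
    by (rule degree_map_poly) simp
  show ?thesis unfolding eval2_def poly_altdef d by (simp add: coeff_map_poly)
qed

lemma hb_eval2: assumes "hb 1 Z" shows "hb (degree p) (eval2 p Z)"
  unfolding eval2_sum
proof (rule hb_sum)
  fix i assume "i \<in> {..degree p}"
  then show "hb (degree p) ([:[:coeff p i:]:] * Z ^ i)"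
    using hb_mono[OF hb_mult[OF hb_const hb_power[OF assms, of i]]] by simp
qed simp

lemma top_eval2: assumes "hb 1 Z" shows "top (degree p) (eval2 p Z) = smult (lead_coeff p) (top 1 Z ^ degree p)"
proof -
  have "top (degree p) (eval2 p Z) = (\<Sum>i\<le>degree p. top (degree p) ([:[:coeff p i:]:] * Z ^ i))"
    unfolding eval2_sum by (simp add: top_sum)
  also have "\<dots> = (\<Sum>i\<in>{degree p}. top (degree p) ([:[:coeff p i:]:] * Z ^ i))"
  proof (rule sum.mono_neutral_right)
    show "\<forall>i\<in>{..degree p} - {degree p}. top (degree p) ([:[:coeff p i:]:] * Z ^ i) = 0"
    proof
      fix i assume "i \<in> {..degree p} - {degree p}"
      then have "i < degree p" by auto
      moreover have "hb (0 + i * 1) ([:[:coeff p i:]:] * Z ^ i)" by (rule hb_mult[OF hb_const hb_power[OF assms]])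
      ultimately show "top (degree p) ([:[:coeff p i:]:] * Z ^ i) = 0" using top_above by simp
    qed
  qed auto
  also have "\<dots> = top (0 + degree p * 1) ([:[:lead_coeff p:]:] * Z ^ degree p)" by simp
  also have "\<dots> = [:lead_coeff p:] * top 1 Z ^ degree p"
    unfolding top_mult[OF hb_const hb_power[OF assms]] top_const top_power[OF assms] ..
  finally show ?thesis by simp
qed

lemma double_root:
  fixes p :: "'a::idom poly"
  assumes "poly p a = 0" "poly (pderiv p) a = 0"
  shows "[:-a,1:]^2 dvd p"
proof -
  obtain q where q: "p = [:-a,1:] * q" using assms(1) poly_eq_0_iff_dvd by blast
  have "pderiv p = [:-a,1:] * pderiv q + q" unfolding q pderiv_mult by (simp add: pderiv_pCons)
  then have "poly q a = 0" using assms(2) by simp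
  then obtain r where "q = [:-a,1:] * r" using poly_eq_0_iff_dvd by blast
  then have "p = [:-a,1:]^2 * r" using q by (metis power2_eq_square mult.assoc)
  then show ?thesis by simp
qed

lemma eval2_pcompose: "eval2 p z = pcompose (map_poly (\<lambda>c. [:c:]) p) z"
  by (simp add: eval2_def pcompose_altdef map_poly_map_poly o_def)

lemma mconst_mult: "mconst a * mconst b = mconst (a * b)"
  unfolding mconst_def by (simp add: mult_single)
lemma mconst_1: "mconst 1 = 1" unfolding mconst_def by simp
lemma mconst_2: "mconst 2 = 2" unfolding mconst_def by simp
lemma mconst_eq_0: "mconst a = 0 \<longleftrightarrow> a = 0" unfolding mconst_def by (metis lookup_single_eq single_zero)
lemma two_half: "2 * mconst (1/2) = 1"
  by (metis mconst_2 mconst_mult mconst_1 divide_self_if zero_neq_numeral times_divide_eq_right mult_1_right)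


lemma coeff_fpoly: "coeff (fpoly n) k = (if k = n then 1 else 0) + (if k < n then avar k else 0)"
  unfolding fpoly_def by (simp add: coeff_sum coeff_monom)

lemma degree_fpoly: "degree (fpoly n) = n"
proof (rule antisym)
  show "degree (fpoly n) \<le> n" by (rule degree_le) (simp add: coeff_fpoly)
  show "n \<le> degree (fpoly n)" by (rule le_degree) (simp add: coeff_fpoly)
qed

lemma lead_fpoly: "lead_coeff (fpoly n) = 1"
  by (simp add: degree_fpoly coeff_fpoly)

definition X0 :: "mpoly poly" where "X0 = [:0,1:]"
definition Pc :: "nat \<Rightarrow> mpoly poly poly" where "Pc n = map_poly (\<lambda>c. [:c:]) (fpoly n)"
definition hh :: mpoly where "hh = mconst (1/2)"
definition Zv :: "mpoly poly poly" where "Zv = smult [:hh:] (Xv + Yv)"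

lemma eval2_Yv: "eval2 (fpoly n) Yv = Pc n"
  unfolding eval2_pcompose Yv_def Pc_def by simp
lemma eval2_Xv: "eval2 (fpoly n) Xv = [:poly (Pc n) X0:]"
  unfolding eval2_pcompose Xv_def Pc_def X0_def by (simp add: pcompose_pCons_0)
lemma YX: "Yv - Xv = [:-X0, 1:]"
  unfolding Yv_def Xv_def X0_def by simp

lemma two_hh: "2 * [:hh:] = 1"
proof -
  have "(2::mpoly poly) * [:hh:] = [:2 * hh:]" by (simp add: numeral_poly) 
  also have "\<dots> = 1" unfolding hh_def two_half by (rule pCons_one)
  finally show ?thesis .
qed

lemma two_hh': "smult hh (2::mpoly poly) = 1" using two_hh by simp

lemma Zv_eq: "Zv = [:[:hh:] * X0, [:hh:]:]"
  unfolding Zv_def Xv_def Yv_def X0_def by simp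

lemma poly_Zv: "poly Zv X0 = X0"
proof -
  have "poly Zv X0 = (2 * [:hh:]) * X0" unfolding Zv_eq by (simp add: algebra_simps)
  also have "\<dots> = X0" using two_hh by (simp del: mult_pCons_left)
  finally show ?thesis .
qed

lemma pderiv_Zv: "pderiv Zv = [:[:hh:]:]"
  unfolding Zv_eq by (simp add: pderiv_pCons)

lemma f1_prop: "(Yv - Xv) * f1 n = eval2 (fpoly n) Yv - eval2 (fpoly n) Xv"
proof -
  let ?N = "eval2 (fpoly n) Yv - eval2 (fpoly n) Xv"
  have "poly ?N X0 = 0" unfolding eval2_Yv eval2_Xv by simp
  then have "(Yv - Xv) dvd ?N" unfolding YX using poly_eq_0_iff_dvd by blast
  then obtain k where k: "?N = (Yv - Xv) * k" by blast
  have nz: "Yv - Xv \<noteq> 0" unfolding YX by simp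
  have "\<exists>!q. (Yv - Xv) * q = ?N"
    using k nz by (metis mult_left_cancel)
  then show ?thesis unfolding f1_def by (rule theI')
qed

lemma f3_prop: "smult [:mconst (1/2):] ((Yv - Xv)^2) * f3 n =
      eval2 (fpoly n) Yv - 2 * eval2 (fpoly n) (smult [:mconst (1/2):] (Xv + Yv)) + eval2 (fpoly n) Xv"
proof -
  let ?N = "eval2 (fpoly n) Yv - 2 * eval2 (fpoly n) (smult [:mconst (1/2):] (Xv + Yv)) + eval2 (fpoly n) Xv"
  have N: "?N = Pc n - 2 * pcompose (Pc n) Zv + [:poly (Pc n) X0:]"
    unfolding eval2_Yv eval2_Xv Zv_def hh_def by (simp add: eval2_pcompose Pc_def)
  have "poly ?N X0 = 0" unfolding N by (simp add: poly_pcompose poly_Zv)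
  moreover have "poly (pderiv ?N) X0 = 0"
  proof -
    have e: "pderiv ?N = pderiv (Pc n) - 2 * (pcompose (pderiv (Pc n)) Zv * [:[:hh:]:])"
      unfolding N by (simp add: pderiv_add pderiv_diff pderiv_mult pderiv_pcompose pderiv_Zv pderiv_pCons numeral_poly pderiv_smult mult.commute)
    have "poly (pderiv ?N) X0 = poly (pderiv (Pc n) - 2 * (pcompose (pderiv (Pc n)) Zv * [:[:hh:]:])) X0"
      by (simp only: e)
    also have "\<dots> = poly (pderiv (Pc n)) X0 - poly (pderiv (Pc n)) X0 * (2 * [:hh:])"
      by (simp add: poly_pcompose poly_Zv algebra_simps)
    also have "\<dots> = 0" using two_hh by simp
    finally show ?thesis .
  qed
  ultimately have "[:-X0,1:]^2 dvd ?N" by (rule double_root)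
  then obtain k where k: "?N = (Yv - Xv)^2 * k" unfolding YX by blast
  have "smult [:mconst (1/2):] ((Yv - Xv)^2) * smult [:2:] k = smult ([:hh:] * [:2:]) ((Yv - Xv)^2 * k)"
    unfolding hh_def by (simp add: mult.commute)
  also have "[:hh:] * [:2:] = 1" using two_hh by (simp add: mult.commute numeral_poly)
  finally have ex: "smult [:mconst (1/2):] ((Yv - Xv)^2) * smult [:2:] k = ?N" using k by simp
  have nz: "smult [:mconst (1/2):] ((Yv - Xv)^2) \<noteq> 0" unfolding YX by (simp add: mconst_eq_0)
  have "\<exists>!q. smult [:mconst (1/2):] ((Yv - Xv)^2) * q = ?N"
    using ex nz by (metis mult_left_cancel)
  then show ?thesis unfolding f3_def by (rule theI')
qed


lemma smult_as_mult: "smult a p = [:a:] * p" by simp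

lemma coeff_fpoly_n[simp]: "coeff (fpoly n) n = 1" by (simp add: coeff_fpoly)

lemma top_2: "top d (2 * P) = 2 * top d P" by (simp only: mult_2 top_add)

lemmas topS = top_Xv[simplified] top_Yv[simplified]


lemma hb_N1: "hb n (eval2 (fpoly n) Yv - eval2 (fpoly n) Xv)"
  using hb_diff[OF hb_eval2[OF hb_Yv, of "fpoly n"] hb_eval2[OF hb_Xv, of "fpoly n"]] by (simp add: degree_fpoly)

lemma top_N1: "top n (eval2 (fpoly n) Yv - eval2 (fpoly n) Xv) = [:0,1:]^n - 1"
proof -
  have a: "top n (eval2 (fpoly n) Yv) = [:0,1:]^n"
    using top_eval2[OF hb_Yv, of "fpoly n"] by (simp only: degree_fpoly lead_fpoly coeff_fpoly_n top_Yv smult_1_left)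
  have b: "top n (eval2 (fpoly n) Xv) = 1"
    using top_eval2[OF hb_Xv, of "fpoly n"] by (simp only: degree_fpoly lead_fpoly coeff_fpoly_n top_Xv smult_1_left power_one)
  show ?thesis unfolding top_diff a b ..
qed

lemma hb_YX: "hb 1 (Yv - Xv)" by (rule hb_diff[OF hb_Yv hb_Xv])
lemma top_YX: "top 1 (Yv - Xv) = [:0,1:] - 1" by (simp add: top_diff topS)
lemma top_YX_nz: "top 1 (Yv - Xv) \<noteq> 0"
proof
  assume "top 1 (Yv - Xv) = 0"
  then have "coeff (top 1 (Yv - Xv)) 1 = 0" by simp
  then show False unfolding top_YX by simp
qed

lemma f1_hb: assumes "n \<ge> 1" shows "hb (n-1) (f1 n)"
  by (rule hb_div[OF hb_YX top_YX_nz _ assms]) (unfold f1_prop, rule hb_N1)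

lemma f1_top: assumes "n \<ge> 1" shows "([:0,1:] - 1) * top (n-1) (f1 n) = [:0,1:]^n - 1"
proof -
  have e1: "top n ((Yv - Xv) * f1 n) = top 1 (Yv-Xv) * top (n-1) (f1 n)"
    by (rule top_div[OF hb_YX top_YX_nz _ assms]) (unfold f1_prop, rule hb_N1)
  have e2: "top n ((Yv - Xv) * f1 n) = [:0,1:]^n - 1" unfolding f1_prop by (rule top_N1)
  from trans[OF sym[OF e1] e2] show ?thesis unfolding top_YX .
qed

lemma hb_Zv: "hb 1 Zv"
  unfolding Zv_def smult_as_mult using hb_mult[OF hb_const hb_add[OF hb_Xv hb_Yv], of hh] by simp

lemma top_Zv: "top 1 Zv = [:hh:] * [:1,1:]"
  unfolding Zv_def smult_as_mult using top_mult[OF hb_const hb_add[OF hb_Xv hb_Yv], of hh]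
  by (simp add: top_const top_add topS one_pCons)

lemmas topZ = top_Zv[simplified]

definition N3 where "N3 n = eval2 (fpoly n) Yv - 2 * eval2 (fpoly n) Zv + eval2 (fpoly n) Xv"

lemma hb_N3: "hb n (N3 n)"
  unfolding N3_def mult_2
  using hb_add[OF hb_diff[OF hb_eval2[OF hb_Yv, of "fpoly n"] hb_add[OF hb_eval2[OF hb_Zv, of "fpoly n"] hb_eval2[OF hb_Zv, of "fpoly n"]]] hb_eval2[OF hb_Xv, of "fpoly n"]]
  by (simp add: degree_fpoly)

lemma top_N3: "top n (N3 n) = [:0,1:]^n - 2 * ([:hh:] * [:1,1:])^n + 1"
proof -
  have a: "top n (eval2 (fpoly n) Yv) = [:0,1:]^n"
    using top_eval2[OF hb_Yv, of "fpoly n"] by (simp only: degree_fpoly lead_fpoly coeff_fpoly_n top_Yv smult_1_left)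
  have b: "top n (eval2 (fpoly n) Xv) = 1"
    using top_eval2[OF hb_Xv, of "fpoly n"] by (simp only: degree_fpoly lead_fpoly coeff_fpoly_n top_Xv smult_1_left power_one)
  have c: "top n (eval2 (fpoly n) Zv) = ([:hh:] * [:1,1:])^n"
    using top_eval2[OF hb_Zv, of "fpoly n"] by (simp only: degree_fpoly lead_fpoly coeff_fpoly_n top_Zv smult_1_left)
  show ?thesis unfolding N3_def top_add top_diff top_2 a b c ..
qed

definition D3 where "D3 = smult [:hh:] ((Yv - Xv)^2)"

lemma D3_alt: "D3 = [:[:hh:]:] * (Yv - Xv)^2" unfolding D3_def by simp

lemma hb_D3: "hb 2 D3"
proof -
  have "hb (0 + 2 * 1) ([:[:hh:]:] * (Yv - Xv)^2)" by (rule hb_mult[OF hb_const hb_power[OF hb_YX]])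
  then show ?thesis unfolding D3_alt by (simp only: add_0 mult_1_right)
qed

lemma top_D3: "top 2 D3 = [:hh:] * ([:0,1:] - 1)^2"
proof -
  have "top (0 + 2 * 1) ([:[:hh:]:] * (Yv - Xv)^2) = top 0 [:[:hh:]:] * top (2*1) ((Yv - Xv)^2)"
    by (rule top_mult[OF hb_const hb_power[OF hb_YX]])
  also have "\<dots> = [:hh:] * top 1 (Yv - Xv) ^ 2" unfolding top_const top_power[OF hb_YX] ..
  finally show ?thesis unfolding D3_alt by (simp only: add_0 mult_1_right top_YX)
qed

lemma top_D3_nz: "top 2 D3 \<noteq> 0"
proof -
  have "([:0,1:] - 1 :: mpoly poly) \<noteq> 0" using top_YX_nz unfolding top_YX .
  moreover have "[:hh:] \<noteq> 0" by (simp add: hh_def mconst_eq_0)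
  ultimately show ?thesis unfolding top_D3 by (intro no_zero_divisors power_not_zero)
qed

lemma f3_prop': "D3 * f3 n = N3 n"
  using f3_prop[of n] unfolding D3_def N3_def Zv_def hh_def .

lemma f3_hb: assumes "n \<ge> 2" shows "hb (n-2) (f3 n)"
  by (rule hb_div[OF hb_D3 top_D3_nz _ assms]) (unfold f3_prop', rule hb_N3)

lemma f3_top: assumes "n \<ge> 2" shows "([:hh:] * ([:0,1:] - 1)^2) * top (n-2) (f3 n) = [:0,1:]^n - 2 * ([:hh:] * [:1,1:])^n + 1"
proof -
  have e1: "top n (D3 * f3 n) = top 2 D3 * top (n-2) (f3 n)"
    by (rule top_div[OF hb_D3 top_D3_nz _ assms]) (unfold f3_prop', rule hb_N3)
  have e2: "top n (D3 * f3 n) = [:0,1:]^n - 2 * ([:hh:] * [:1,1:])^n + 1" unfolding f3_prop' by (rule top_N3)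
  from trans[OF sym[OF e1] e2] show ?thesis unfolding top_D3 .
qed


lemma xm1: "([:0,1:] - 1 :: 'a::comm_ring_1 poly) = [:-1,1:]"
  by (simp only: one_pCons diff_pCons diff_0 diff_zero)

definition P1q :: "nat \<Rightarrow> rat poly" where "P1q n = (\<Sum>i<n. [:0,1:]^i)"
definition Lq :: "rat poly" where "Lq = [:1/2, 1/2:]"
definition Gq :: "nat \<Rightarrow> rat poly" where "Gq n = [:0,1:]^n - smult 2 (Lq^n) + 1"
definition P3q :: "nat \<Rightarrow> rat poly" where "P3q n = smult 2 (Gq n div [:-1,1:]^2)"

lemma P1q_id: "([:0,1:] - 1) * P1q n = [:0,1:]^n - 1"
  using power_diff_sumr2[of "[:0,1:]::rat poly" n 1] unfolding P1q_def by simp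

lemma Gq_dvd: "[:-1,1:]^2 dvd Gq n"
proof -
  have a: "poly (Gq n) 1 = 0" by (simp add: Gq_def Lq_def)
  have "pderiv (Gq n) = smult (of_nat n) ([:0,1:]^(n-1)) - smult (2 * of_nat n) (Lq^(n-1) * [:1/2:])"
    unfolding Gq_def by (simp add: pderiv_diff pderiv_add pderiv_power pderiv_mult pderiv_pCons pderiv_smult Lq_def)
  then have b: "poly (pderiv (Gq n)) 1 = 0" by (simp add: Lq_def)
  from double_root[OF a b] show ?thesis by simp
qed

lemma P3q_id: "([:1/2:] * ([:0,1:] - 1)^2) * P3q n = Gq n"
proof -
  have e: "[:0,1:] - 1 = ([:-1,1:] :: rat poly)" by (rule xm1)
  have "([:1/2:] * ([:0,1:] - 1)^2) * P3q n = [:-1,1:]^2 * (Gq n div [:-1,1:]^2)"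
    unfolding P3q_def e by simp
  also have "\<dots> = Gq n" using Gq_dvd by (rule dvd_mult_div_cancel)
  finally show ?thesis .
qed

lemma degree_x_pow_minus1: "n \<ge> 1 \<Longrightarrow> degree ([:0,1:]^n - (1::'a::idom poly)) = n"
proof -
  assume n: "n \<ge> 1"
  have "degree ([:0,1:]^n + (-1::'a poly)) = degree ([:0,1:]^n :: 'a poly)"
    by (rule degree_add_eq_left) (use n in \<open>simp add: degree_power_eq\<close>)
  then show ?thesis by (simp add: degree_power_eq)
qed

lemma degree_P1q: assumes "n \<ge> 1" shows "degree (P1q n) = n - 1"
proof -
  have nz: "P1q n \<noteq> 0" using P1q_id[of n] degree_x_pow_minus1[OF assms, where 'a=rat] assms by auto
  have "degree (([:0,1:] - 1) * P1q n) = 1 + degree (P1q n)"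
    by (subst degree_mult_eq) (use nz in \<open>auto simp: xm1\<close>)
  then show ?thesis using P1q_id[of n] degree_x_pow_minus1[OF assms, where 'a=rat] by simp
qed

lemma degree_Gq: assumes "n \<ge> 2" shows "degree (Gq n) = n"
proof (rule antisym)
  have dL: "degree (Lq ^ n) = n" by (simp add: degree_power_eq Lq_def)
  have dx: "degree ([:0,1:]^n :: rat poly) = n" by (simp add: degree_power_eq)
  show "degree (Gq n) \<le> n" unfolding Gq_def
    by (intro degree_add_le degree_diff_le) (auto simp: dL dx degree_power_eq)
  have cL: "coeff (Lq ^ n) n = (1/2)^n" using lead_coeff_power[of Lq n] dL by (simp add: Lq_def)
  have cx: "coeff ([:0,1:]^n :: rat poly) n = 1" using lead_coeff_power[of "[:0,1:]::rat poly" n] dx by simp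
  have "(1/2::rat)^n \<le> (1/2)^2" by (rule power_decreasing) (use assms in auto)
  moreover have "(1/2::rat)^2 = 1/4" by (simp add: power2_eq_square)
  ultimately have h: "2 * (1/2::rat)^n \<noteq> 1" by linarith
  have "coeff (Gq n) n = 1 - 2 * (1/2)^n" unfolding Gq_def using assms cL cx by simp
  then have "coeff (Gq n) n \<noteq> 0" using h by simp
  then show "n \<le> degree (Gq n)" by (rule le_degree)
qed

lemma degree_P3q: assumes "n \<ge> 2" shows "degree (P3q n) = n - 2"
proof -
  have nz: "P3q n \<noteq> 0" using P3q_id[of n] degree_Gq[OF assms] assms by auto
  have nz2: "[:1/2:] * ([:0,1:] - 1)^2 \<noteq> (0::rat poly)" by (simp add: xm1)
  have e: "degree (Gq n) = degree ([:1/2:] * ([:0,1:] - 1)^2 :: rat poly) + degree (P3q n)"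
    by (simp only: P3q_id[symmetric] degree_mult_eq[OF nz2 nz])
  moreover have "degree ([:1/2:] * ([:0,1:] - 1)^2 :: rat poly) = 2"
    by (simp add: degree_power_eq xm1)
  ultimately show ?thesis using degree_Gq[OF assms] by simp
qed


interpretation ofr_p: map_poly_inj_comm_ring_hom "of_rat :: rat \<Rightarrow> complex" ..

definition ev :: "complex \<Rightarrow> rat poly \<Rightarrow> complex" where "ev z p = poly (map_poly of_rat p) z"

lemma ev_mult: "ev z (p * q) = ev z p * ev z q" unfolding ev_def ofr_p.hom_mult by simp
lemma ev_add: "ev z (p + q) = ev z p + ev z q" unfolding ev_def ofr_p.hom_add by simp
lemma ev_diff: "ev z (p - q) = ev z p - ev z q" unfolding ev_def ofr_p.hom_minus by simp
lemma ev_power: "ev z (p ^ k) = ev z p ^ k" unfolding ev_def ofr_p.hom_power by simp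
lemma ev_1: "ev z 1 = 1" unfolding ev_def by simp
lemma ev_x: "ev z [:0,1:] = z" unfolding ev_def by simp
lemma ev_const: "ev z [:c:] = of_rat c" unfolding ev_def by (simp add: of_rat_hom.map_poly_pCons_hom)
lemma ev_smult: "ev z (smult c p) = of_rat c * ev z p" unfolding ev_def by (simp add: of_rat_hom.map_poly_hom_smult)
lemma ev_Lq: "ev z Lq = (1 + z) / 2" unfolding ev_def Lq_def by (simp add: of_rat_divide field_simps)

lemma unit_circle: fixes z :: complex assumes "cmod z = 1" "cmod (1 + z) = 2" shows "z = 1"
proof -
  have a: "Re z ^ 2 + Im z ^ 2 = 1" using assms(1) cmod_power2[of z] by simp
  have b: "(1 + Re z) ^ 2 + Im z ^ 2 = 4" using assms(2) cmod_power2[of "1 + z"] by simp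
  have "Re z = 1" using a b by (simp add: power2_eq_square algebra_simps)
  moreover then have "Im z = 0" using a by simp
  ultimately show ?thesis by (simp add: complex_eq_iff)
qed

lemma norm_pow_1: fixes w :: complex assumes "w ^ n = 1" "n > 0" shows "cmod w = 1"
proof -
  have "cmod w ^ n = 1 ^ n" using assms(1) by (metis norm_one norm_power power_one)
  then show ?thesis using power_eq_iff_eq_base[OF assms(2)] by (metis norm_ge_zero zero_le_one)
qed

lemma no_common_root:
  assumes n: "n \<ge> 2" and r1: "ev z (P1q n) = 0" and r3: "ev z (P3q n) = 0"
  shows False
proof -
  have "ev z (([:0,1:] - 1) * P1q n) = ev z ([:0,1:]^n - 1)" unfolding P1q_id ..
  then have "z ^ n = 1" unfolding ev_mult ev_diff ev_power ev_x ev_1 r1 by simp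
  moreover have "ev z (([:1/2:] * ([:0,1:] - 1)^2) * P3q n) = ev z (Gq n)" unfolding P3q_id ..
  then have "0 = z ^ n - 2 * ((1 + z) / 2) ^ n + 1"
    unfolding Gq_def ev_mult ev_diff ev_add ev_power ev_x ev_1 r3 ev_smult ev_Lq by simp
  ultimately have w: "((1 + z) / 2) ^ n = 1" by simp
  have "cmod z = 1" using norm_pow_1[OF \<open>z^n = 1\<close>] n by simp
  moreover have "cmod ((1 + z) / 2) = 1" using norm_pow_1[OF w] n by simp
  then have "cmod (1 + z) = 2" by (simp add: norm_divide)
  ultimately have "z = 1" by (rule unit_circle)
  moreover have "ev 1 (P1q n) = of_nat n"
    unfolding ev_def ofr_p.poly_map_poly_1 by (simp add: P1q_def poly_sum)
  ultimately show False using r1 n by simp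
qed

lemma res_nz: assumes n: "n \<ge> 2" shows "resultant (P1q n) (P3q n) \<noteq> 0"
proof
  assume "resultant (P1q n) (P3q n) = 0"
  then have "resultant (map_poly of_rat (P1q n)) (map_poly (of_rat :: rat \<Rightarrow> complex) (P3q n)) = 0"
    by (simp add: of_rat_hom.resultant_hom)
  then have "degree (gcd (map_poly of_rat (P1q n)) (map_poly (of_rat :: rat \<Rightarrow> complex) (P3q n))) \<noteq> 0"
    using resultant_0_gcd by blast
  then have "\<not> constant (poly (gcd (map_poly of_rat (P1q n)) (map_poly (of_rat :: rat \<Rightarrow> complex) (P3q n))))"
    by (simp add: constant_degree)
  from fundamental_theorem_of_algebra[OF this] obtain z
    where z: "poly (gcd (map_poly of_rat (P1q n)) (map_poly (of_rat :: rat \<Rightarrow> complex) (P3q n))) z = 0" by blast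
  have "ev z (P1q n) = 0" unfolding ev_def using z
    by (metis dvd_def gcd_dvd1 mult_zero_left poly_mult)
  moreover have "ev z (P3q n) = 0" unfolding ev_def using z
    by (metis dvd_def gcd_dvd2 mult_zero_left poly_mult)
  ultimately show False using no_common_root n by blast
qed


interpretation mconst_hom: inj_comm_ring_hom mconst
  by unfold_locales (auto simp: mconst_def mult_single single_add mconst_eq_0[unfolded mconst_def] intro: injI)
interpretation mconst_p: map_poly_inj_comm_ring_hom mconst ..

lemma mc_x: "map_poly mconst [:0,1:] = [:0,1:]"
  by (simp add: mconst_hom.map_poly_pCons_hom)
lemma mc_const: "map_poly mconst [:c:] = [:mconst c:]"
  by (simp add: mconst_hom.map_poly_pCons_hom)

lemma T1_eq: assumes "n \<ge> 1" shows "top (n-1) (f1 n) = map_poly mconst (P1q n)"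
proof -
  have "map_poly mconst (([:0,1:] - 1) * P1q n) = map_poly mconst ([:0,1:]^n - 1)" unfolding P1q_id ..
  then have "([:0,1:] - 1) * map_poly mconst (P1q n) = [:0,1:]^n - 1"
    unfolding mconst_p.hom_mult mconst_p.hom_minus mconst_p.hom_power mconst_p.hom_one mc_x .
  then have "([:0,1:] - 1) * map_poly mconst (P1q n) = ([:0,1:] - 1) * top (n-1) (f1 n)"
    using f1_top[OF assms] by simp
  moreover have "([:0,1:] - 1 :: mpoly poly) \<noteq> 0"
  proof
    assume "([:0,1:] - 1 :: mpoly poly) = 0"
    then have "coeff ([:0,1:] - 1 :: mpoly poly) 1 = 0" by simp
    then show False by simp
  qed
  ultimately show ?thesis by simp
qed

lemma two_smult: "smult (2::mpoly) Y = 2 * Y"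
proof -
  have "smult (2::mpoly) Y = smult 1 Y + smult 1 Y" by (simp only: one_add_one[symmetric] smult_add_left)
  also have "\<dots> = 2 * Y" by (simp only: smult_1_left mult_2)
  finally show ?thesis .
qed

lemma T3_eq: assumes "n \<ge> 2" shows "top (n-2) (f3 n) = map_poly mconst (P3q n)"
proof -
  have hL: "map_poly mconst Lq = [:hh:] * [:1,1:]"
    unfolding Lq_def hh_def by (simp add: mconst_hom.map_poly_pCons_hom mconst_mult[symmetric])
  have "map_poly mconst (([:1/2:] * ([:0,1:] - 1)^2) * P3q n) = map_poly mconst (Gq n)" unfolding P3q_id ..
  then have "([:hh:] * ([:0,1:] - 1)^2) * map_poly mconst (P3q n) = [:0,1:]^n - 2 * ([:hh:] * [:1,1:])^n + 1"
    unfolding Gq_def mconst_p.hom_mult mconst_p.hom_minus mconst_p.hom_power mconst_p.hom_one mc_x mconst_p.hom_add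
      mconst_hom.map_poly_hom_smult hL mc_const mconst_2 two_smult hh_def[symmetric] .
  then have e: "([:hh:] * ([:0,1:] - 1)^2) * map_poly mconst (P3q n) = ([:hh:] * ([:0,1:] - 1)^2) * top (n-2) (f3 n)"
    using f3_top[OF assms] by (simp only:)
  have nz: "([:hh:] * ([:0,1:] - 1)^2 :: mpoly poly) \<noteq> 0"
  proof -
    have "([:0,1:] - 1 :: mpoly poly) \<noteq> 0"
    proof
      assume "([:0,1:] - 1 :: mpoly poly) = 0"
      then have "coeff ([:0,1:] - 1 :: mpoly poly) 1 = 0" by simp
      then show False by simp
    qed
    moreover have "[:hh:] \<noteq> 0" by (simp add: hh_def mconst_eq_0)
    ultimately show ?thesis by (intro no_zero_divisors power_not_zero)
  qed
  show ?thesis using e mult_left_cancel[OF nz] by (rule_tac sym) blast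
qed


lemma prod_coeff_bound:
  fixes f :: "'b \<Rightarrow> 'a::comm_semiring_1 poly"
  assumes "finite S" "\<And>i. i \<in> S \<Longrightarrow> degree (f i) \<le> e i"
  shows "degree (\<Prod>i\<in>S. f i) \<le> (\<Sum>i\<in>S. e i) \<and> coeff (\<Prod>i\<in>S. f i) (\<Sum>i\<in>S. e i) = (\<Prod>i\<in>S. coeff (f i) (e i))"
  using assms
proof (induction S rule: finite_induct)
  case empty then show ?case by simp
next
  case (insert x F)
  then have IH: "degree (\<Prod>i\<in>F. f i) \<le> (\<Sum>i\<in>F. e i)" "coeff (\<Prod>i\<in>F. f i) (\<Sum>i\<in>F. e i) = (\<Prod>i\<in>F. coeff (f i) (e i))"
    by auto
  have dx: "degree (f x) \<le> e x" using insert by auto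
  have "degree (f x * (\<Prod>i\<in>F. f i)) \<le> e x + (\<Sum>i\<in>F. e i)"
    using degree_mult_le[of "f x" "\<Prod>i\<in>F. f i"] dx IH(1) by linarith
  moreover have "coeff (f x * (\<Prod>i\<in>F. f i)) (e x + (\<Sum>i\<in>F. e i)) = coeff (f x) (e x) * (\<Prod>i\<in>F. coeff (f i) (e i))"
    using coeff_mult_bound[OF dx IH(1)] IH(2) by simp
  ultimately show ?case using insert by simp
qed

lemma det_top:
  fixes A :: "'a::comm_ring_1 poly mat" and u v :: "nat \<Rightarrow> int"
  assumes A: "A \<in> carrier_mat m m"
  and z: "\<And>i j. i < m \<Longrightarrow> j < m \<Longrightarrow> u i + v j < 0 \<Longrightarrow> A $$ (i,j) = 0"
  and d: "\<And>i j. i < m \<Longrightarrow> j < m \<Longrightarrow> degree (A $$ (i,j)) \<le> nat (u i + v j)"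
  and T: "(\<Sum>i<m. u i) + (\<Sum>j<m. v j) = int N"
  shows "degree (det A) \<le> N \<and> coeff (det A) N = det (mat m m (\<lambda>(i,j). coeff (A $$ (i,j)) (nat (u i + v j))))"
proof -
  define B where "B = mat m m (\<lambda>(i,j). coeff (A $$ (i,j)) (nat (u i + v j)))"
  have B: "B \<in> carrier_mat m m" unfolding B_def by simp
  have key: "degree (\<Prod>i = 0..<m. A $$ (i, p i)) \<le> N \<and>
     coeff (\<Prod>i = 0..<m. A $$ (i, p i)) N = (\<Prod>i = 0..<m. B $$ (i, p i))" if p: "p permutes {0..<m}" for p
  proof (cases "\<exists>i<m. u i + v (p i) < 0")
    case True
    then obtain i where i: "i < m" "u i + v (p i) < 0" by blast
    have pi: "p i < m" using p i(1) by (simp add: permutes_in_image)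
    have "A $$ (i, p i) = 0" using z[OF i(1) pi i(2)] .
    then have "(\<Prod>i = 0..<m. A $$ (i, p i)) = 0" using i(1) by (intro prod_zero) auto
    moreover have "B $$ (i, p i) = 0" unfolding B_def using i(1) pi \<open>A $$ (i, p i) = 0\<close> by simp
    then have "(\<Prod>i = 0..<m. B $$ (i, p i)) = 0" using i(1) by (intro prod_zero) auto
    ultimately show ?thesis by simp
  next
    case False
    have sv: "(\<Sum>i = 0..<m. v (p i)) = (\<Sum>j<m. v j)"
      using sum.permute[OF p, of v] by (simp add: atLeast0LessThan comp_def)
    have "int (\<Sum>i = 0..<m. nat (u i + v (p i))) = (\<Sum>i = 0..<m. (u i + v (p i)))"
      unfolding of_nat_sum using False by (intro sum.cong) auto
    also have "(\<Sum>i = 0..<m. (u i + v (p i))) = int N"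
      using T sv by (simp add: sum.distrib atLeast0LessThan)
    finally have sN: "(\<Sum>i = 0..<m. nat (u i + v (p i))) = N" by (simp only: of_nat_eq_iff)
    have pim: "i < m \<Longrightarrow> p i < m" for i using p by (simp add: permutes_in_image)
    have "degree (\<Prod>i = 0..<m. A $$ (i, p i)) \<le> (\<Sum>i = 0..<m. nat (u i + v (p i))) \<and>
      coeff (\<Prod>i = 0..<m. A $$ (i, p i)) (\<Sum>i = 0..<m. nat (u i + v (p i))) = (\<Prod>i = 0..<m. coeff (A $$ (i, p i)) (nat (u i + v (p i))))"
      by (rule prod_coeff_bound) (auto intro: d pim)
    moreover have "(\<Prod>i = 0..<m. coeff (A $$ (i, p i)) (nat (u i + v (p i)))) = (\<Prod>i = 0..<m. B $$ (i, p i))"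
      by (rule prod.cong) (auto simp: B_def pim)
    ultimately show ?thesis unfolding sN by simp
  qed
  have sgn: "degree (of_int (sign p) * X) \<le> degree X \<and> coeff (of_int (sign p) * X) k = of_int (sign p) * coeff X k"
    for p and X :: "'a poly" and k
    by (simp add: of_int_poly degree_smult_le)
  have "degree (det A) \<le> N"
    unfolding det_def'[OF A]
  proof (rule degree_sum_le)
    fix p assume "p \<in> {p. p permutes {0..<m}}"
    then show "degree (of_int (sign p) * (\<Prod>i = 0..<m. A $$ (i, p i))) \<le> N"
      using key sgn order.trans by blast
  qed (simp add: finite_permutations)
  moreover have "coeff (det A) N = det B"
    unfolding det_def'[OF A] det_def'[OF B] coeff_sum
  proof (rule sum.cong[OF refl])
    fix p assume "p \<in> {p. p permutes {0..<m}}"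
    then have pp: "p permutes {0..<m}" by simp
    have c1: "coeff (of_int (sign p) * X) N = of_int (sign p) * coeff X N" for X :: "'a poly" using sgn by blast
    show "coeff (of_int (sign p) * (\<Prod>i = 0..<m. A $$ (i, p i))) N = of_int (sign p) * (\<Prod>i = 0..<m. B $$ (i, p i))"
      unfolding c1 using key[OF pp] by simp
  qed
  ultimately show ?thesis unfolding B_def by simp
qed


lemma degree_from_top: assumes "hb d P" "coeff (top d P) d \<noteq> 0" shows "degree P = d"
proof (rule antisym)
  show "degree P \<le> d" by (rule degree_le) (use hbD1[OF assms(1)] in auto)
  have "coeff P d \<noteq> 0" using assms(2) by (auto simp: coeff_top)
  then show "d \<le> degree P" by (rule le_degree)
qed

lemma P1q_nz: "n \<ge> 1 \<Longrightarrow> P1q n \<noteq> 0"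
  using degree_P1q P1q_id[of n] degree_x_pow_minus1[of n, where 'a=rat] by fastforce

lemma P3q_nz: "n \<ge> 2 \<Longrightarrow> P3q n \<noteq> 0"
  using P3q_id[of n] degree_Gq[of n] by fastforce

lemma deg_f1: assumes "n \<ge> 1" shows "degree (f1 n) = n - 1"
proof (rule degree_from_top[OF f1_hb[OF assms]])
  have "coeff (top (n-1) (f1 n)) (n-1) = mconst (lead_coeff (P1q n))"
    unfolding T1_eq[OF assms] using degree_P1q[OF assms] by simp
  then show "coeff (top (n-1) (f1 n)) (n-1) \<noteq> 0" using P1q_nz[OF assms] by (simp add: mconst_eq_0)
qed

lemma deg_f3: assumes "n \<ge> 2" shows "degree (f3 n) = n - 2"
proof (rule degree_from_top[OF f3_hb[OF assms]])
  have "coeff (top (n-2) (f3 n)) (n-2) = mconst (lead_coeff (P3q n))"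
    unfolding T3_eq[OF assms] using degree_P3q[OF assms] by simp
  then show "coeff (top (n-2) (f3 n)) (n-2) \<noteq> 0" using P3q_nz[OF assms] by (simp add: mconst_eq_0)
qed

lemma sum_u:
  fixes dp dq :: nat
  defines "u \<equiv> \<lambda>i. if i < dq then - int i else int dq - int i"
  shows "(\<Sum>i<dp+dq. u i) + (\<Sum>j<dp+dq. int j) = int (dp * dq)"
proof -
  define w where "w = (\<lambda>i::nat. if i < dq then 0 else int dq)"
  have "(\<Sum>i<dp+dq. u i) = (\<Sum>i<dp+dq. w i - int i)"
    by (rule sum.cong) (auto simp: u_def w_def)
  also have "\<dots> = (\<Sum>i<dp+dq. w i) - (\<Sum>i<dp+dq. int i)" by (rule sum_subtractf)
  finally have e1: "(\<Sum>i<dp+dq. u i) + (\<Sum>j<dp+dq. int j) = (\<Sum>i<dp+dq. w i)" by simp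
  have "(\<Sum>i<dp+dq. w i) = (\<Sum>i=0..<dq. w i) + (\<Sum>i=dq..<dp+dq. w i)"
    unfolding lessThan_atLeast0 by (rule sum.atLeastLessThan_concat[symmetric]) auto
  also have "(\<Sum>i=0..<dq. w i) = 0" by (rule sum.neutral) (auto simp: w_def)
  also have "(\<Sum>i=dq..<dp+dq. w i) = (\<Sum>i=dq..<dp+dq. int dq)" by (rule sum.cong) (auto simp: w_def)
  also have "\<dots> = int (dp * dq)" by simp
  finally show ?thesis using e1 by simp
qed

lemma nat_int_3: "nat (int a - int b + int c) = a + c - b" by arith
lemma nat_int_2: "nat (int a - int b) = a - b" by arith

theorem main:
  fixes n :: nat
  assumes n3: "n \<ge> 3"
  shows "degree (Fres n) = (n - 1) * (n - 2)"
proof -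
  define dp where "dp = n - 1"
  define dq where "dq = n - 2"
  have n1: "n \<ge> 1" and n2: "n \<ge> 2" using n3 by auto
  have dp': "degree (f1 n) = dp" unfolding dp_def by (rule deg_f1[OF n1])
  have dq': "degree (f3 n) = dq" unfolding dq_def by (rule deg_f3[OF n2])
  define S where "S = sylvester_mat (f1 n) (f3 n)"
  define m where "m = dp + dq"
  have S: "S \<in> carrier_mat m m" unfolding S_def m_def using sylvester_carrier_mat[of "f1 n" "f3 n"] dp' dq' by simp
  have Sij: "S $$ (i,j) = (if i < dq then if i \<le> j \<and> j - i \<le> dp then coeff (f1 n) (dp + i - j) else 0
     else if i - dq \<le> j \<and> j \<le> i then coeff (f3 n) (i - j) else 0)" if "i < m" "j < m" for i j
    using sylvester_index_mat[of i "f1 n" "f3 n" j] that unfolding S_def m_def dp' dq' by simp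
  define u where "u = (\<lambda>i::nat. if i < dq then - int i else int dq - int i)"
  define v where "v = (\<lambda>j::nat. int j)"
  have hb1: "hb dp (f1 n)" unfolding dp_def by (rule f1_hb[OF n1])
  have hb3: "hb dq (f3 n)" unfolding dq_def by (rule f3_hb[OF n2])
  have z: "S $$ (i,j) = 0" if "i < m" "j < m" "u i + v j < 0" for i j
    using that unfolding Sij[OF that(1,2)] u_def v_def by (auto split: if_splits)
  have d: "degree (S $$ (i,j)) \<le> nat (u i + v j)" if ij: "i < m" "j < m" for i j
  proof (cases "i < dq")
    case True
    show ?thesis
    proof (cases "i \<le> j \<and> j - i \<le> dp")
      case True2: True
      have "degree (coeff (f1 n) (dp + i - j)) \<le> dp - (dp + i - j)" by (rule hbD2[OF hb1])
      moreover have "dp - (dp + i - j) = nat (u i + v j)" using True True2 by (auto simp: u_def v_def)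
      ultimately show ?thesis unfolding Sij[OF ij] using True True2 by simp
    qed (use True in \<open>auto simp: Sij[OF ij]\<close>)
  next
    case False
    show ?thesis
    proof (cases "i - dq \<le> j \<and> j \<le> i")
      case True2: True
      have "degree (coeff (f3 n) (i - j)) \<le> dq - (i - j)" by (rule hbD2[OF hb3])
      moreover have "dq - (i - j) = nat (u i + v j)" using False True2 by (auto simp: u_def v_def)
      ultimately show ?thesis unfolding Sij[OF ij] using False True2 by simp
    qed (use False in \<open>auto simp: Sij[OF ij]\<close>)
  qed
  have T: "(\<Sum>i<m. u i) + (\<Sum>j<m. v j) = int (dp * dq)"
    unfolding m_def u_def v_def by (rule sum_u)
  note DT = det_top[OF S z d T]
  define T1 where "T1 = top dp (f1 n)"
  define T3 where "T3 = top dq (f3 n)"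
  have T1m: "T1 = map_poly mconst (P1q n)" unfolding T1_def dp_def by (rule T1_eq[OF n1])
  have T3m: "T3 = map_poly mconst (P3q n)" unfolding T3_def dq_def by (rule T3_eq[OF n2])
  have dT1: "degree T1 = dp" unfolding T1m dp_def using degree_P1q[OF n1] by simp
  have dT3: "degree T3 = dq" unfolding T3m dq_def using degree_P3q[OF n2] by simp
  have B: "mat m m (\<lambda>(i,j). coeff (S $$ (i,j)) (nat (u i + v j))) = sylvester_mat T1 T3"
  proof (rule eq_matI)
    fix i j assume "i < dim_row (sylvester_mat T1 T3)" "j < dim_col (sylvester_mat T1 T3)"
    then have ij: "i < m" "j < m" using dT1 dT3 unfolding m_def by auto
    have Y: "sylvester_mat T1 T3 $$ (i,j) = (if i < dq then if i \<le> j \<and> j - i \<le> dp then coeff T1 (dp + i - j) else 0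
     else if i - dq \<le> j \<and> j \<le> i then coeff T3 (i - j) else 0)"
      using sylvester_index_mat[of i T1 T3 j] ij unfolding m_def dT1 dT3 by simp
    show "mat m m (\<lambda>(i,j). coeff (S $$ (i,j)) (nat (u i + v j))) $$ (i, j) = sylvester_mat T1 T3 $$ (i, j)"
    proof -
      have L: "mat m m (\<lambda>(i,j). coeff (S $$ (i,j)) (nat (u i + v j))) $$ (i, j) = coeff (S $$ (i,j)) (nat (u i + v j))"
        using ij by simp
      show ?thesis unfolding L Y Sij[OF ij]
        by (auto simp: coeff_top u_def v_def T1_def T3_def nat_int_3 nat_int_2)
    qed
  qed (use dT1 dT3 in \<open>auto simp: m_def\<close>)
  have "det (sylvester_mat T1 T3) = mconst (resultant (P1q n) (P3q n))"
    unfolding T1m T3m resultant_def[symmetric] by (rule mconst_hom.resultant_hom)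
  then have detB: "det (sylvester_mat T1 T3) \<noteq> 0" using res_nz[OF n2] by (simp add: mconst_eq_0)
  have FS: "Fres n = det S" unfolding Fres_def resultant_def S_def ..
  have "degree (Fres n) \<le> dp * dq" "coeff (Fres n) (dp * dq) \<noteq> 0"
    using DT detB unfolding FS B by auto
  then have "degree (Fres n) = dp * dq" using le_degree antisym by blast
  then show ?thesis unfolding dp_def dq_def .
qed


theorem theorem6:
  fixes n :: nat
  assumes "n \<ge> 3"
  shows "degree (Fres n) = (n - 1) * (n - 2)"
  using assms by (rule main)

end
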